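(* Let $c>0$, $D>0$, $k>0$, let $u$ be the solution and $u_L$ its truncation of degree $L\in\mathbb N$ as described in the context. Then there is a constant $C$ depending only on $c$, $D$, $k$ such that, uniformly over $\theta\in[0,\pi)$, $\varphi\in[0,2\pi)$, for all $t>0$, \[ \big(\mathbf{MSE}(u(\theta ,\varphi ,t)-u_L(\theta ,\varphi ,t))\big)^{1/2}=\|u(\theta ,\varphi ,t)-u_L(\theta ,\varphi ,t)\|_{L_2(\Omega)} \le C\left(\sum_{l=L}^{\infty }(2l+1)C_{l}\right)^{1/2}, \] and, for $L>\frac{\sqrt{D^{2}k^{2}+c^{2}}-Dk}{2Dk}$, \[ \|u(\theta ,\varphi ,t)-u_L(\theta ,\varphi ,t)\|_{L_2(\Omega)}\le C\exp\left( -\frac{c^{2}t}{2D}\right)\left(\sum_{l=L}^{\infty}(2l+1)C_{l}\right)^{1/2}, \] where $\mathbf{MSE}(u-u_L)=\mathbf{Var}(u-u_L)=\|u-u_L\|^2_{L_2(\Omega)}$.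
   Context: On the unit sphere with coordinates $(\theta,\varphi)$, $Y_{lm}(\theta,\varphi)=d_{lm}e^{im\varphi}P_l^m(\cos\theta)$, $d_{lm}=(-1)^m\big[\frac{(2l+1)(l-m)!}{4\pi(l+m)!}\big]^{1/2}$, are complex spherical harmonics; $\mathbf{0}$ denotes $\theta=\varphi=0$. $T=\sum_{l,m}a_{lm}Y_{lm}$ is a real Gaussian isotropic field with $a_{lm}$ complex Gaussian, $a_{lm}=(-1)^ma_{l,-m}$, $\mathbf E a_{lm}=0$, $\mathbf E a_{lm}\overline{a_{l'm'}}=\delta_l^{l'}\delta_m^{m'}C_l$, independent for $m\ne-m'$, and $\sum_l(2l+1)C_l<\infty$. The solution of $\frac{1}{c^2}u_{tt}+\frac1Du_t=k^2\Delta_{(\theta,\varphi)}u$, $u|_{t=0}=T$, $u_t|_{t=0}=0$, is $u(\theta,\varphi,t)=\exp(-\frac{c^2t}{2D})\sum_{l\ge0}\sum_{m=-l}^lY_{lm}(\theta,\varphi)\xi_{lm}(t)$ and its truncation is $u_L$, the same expression with $l$ restricted to $0\le l\le L-1$, where $\xi_{lm}(t)=\sqrt{\frac{4\pi}{2l+1}}a_{lm}\overline{Y_{l0}(\mathbf 0)}[A_l(t)+B_l(t)]$, $A_l(t)=[\cosh(tK_l)+\frac{c^2}{2DK_l}\sinh(tK_l)]\mathbf 1_{\{l\le l^*\}}$, $B_l(t)=[\cos(tK_l')+\frac{c^2}{2DK_l'}\sin(tK_l')]\mathbf 1_{\{l>l^*\}}$, $K_l=\sqrt{\frac{c^4}{4D^2}-c^2l(l+1)k^2}$,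 $K_l'=\sqrt{c^2l(l+1)k^2-\frac{c^4}{4D^2}}$, $l^*=\frac{\sqrt{D^2k^2+c^2}-Dk}{2Dk}$ (with $\sinh(tK_l)/K_l:=t$ if $K_l=0$). $\|X\|_{L_2(\Omega)}=(\mathbf E|X|^2)^{1/2}$. *)

theory Defs
  imports "HOL-Probability.Probability" "HOL-Computational_Algebra.Polynomial"
begin

(* Legendre polynomial via Rodrigues' formula:
   P_l(x) = 1/(2^l l!) d^l/dx^l (x^2-1)^l ; here we keep the polynomial (x^2-1)^l
   and differentiate it formally. *)
definition legendre_rodrigues_poly :: "nat \<Rightarrow> nat \<Rightarrow> real poly" where
  "legendre_rodrigues_poly l j = (pderiv ^^ j) ([:-1, 0, 1:] ^ l)"

(* Associated Legendre function P_l^m(x) for 0 <= m (no Condon-Shortley phase,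
   since the phase (-1)^m is contained in d_{lm}):
   P_l^m(x) = (1-x^2)^{m/2} d^m/dx^m P_l(x)
            = (1-x^2)^{m/2} / (2^l l!) d^{l+m}/dx^{l+m} (x^2-1)^l *)
definition assoc_legendre_nonneg :: "nat \<Rightarrow> nat \<Rightarrow> real \<Rightarrow> real" where
  "assoc_legendre_nonneg l m x =
     sqrt (1 - x\<^sup>2) ^ m * poly (legendre_rodrigues_poly l (l + m)) x / (2 ^ l * fact l)"

definition assoc_legendre :: "nat \<Rightarrow> int \<Rightarrow> real \<Rightarrow> real" where
  "assoc_legendre l m x =
     (if 0 \<le> m then assoc_legendre_nonneg l (nat m) x
      else (-1) ^ nat (-m) * fact (l - nat (-m)) / fact (l + nat (-m))
             * assoc_legendre_nonneg l (nat (-m)) x)"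

definition sph_const :: "nat \<Rightarrow> int \<Rightarrow> real" where
  "sph_const l m = (-1) ^ nat \<bar>m\<bar> *
     sqrt ((2 * real l + 1) * fact (nat (int l - m)) / (4 * pi * fact (nat (int l + m))))"

definition sph_harm :: "nat \<Rightarrow> int \<Rightarrow> real \<Rightarrow> real \<Rightarrow> complex" where
  "sph_harm l m \<theta> \<phi> =
     complex_of_real (sph_const l m) * cis (real_of_int m * \<phi>)
       * complex_of_real (assoc_legendre l m (cos \<theta>))"

definition lstar :: "real \<Rightarrow> real \<Rightarrow> real \<Rightarrow> real" where
  "lstar c D k = (sqrt (D\<^sup>2 * k\<^sup>2 + c\<^sup>2) - D * k) / (2 * D * k)"

definition Kl :: "real \<Rightarrow> real \<Rightarrow> real \<Rightarrow> nat \<Rightarrow> real" where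
  "Kl c D k l = sqrt (c ^ 4 / (4 * D\<^sup>2) - c\<^sup>2 * real l * (real l + 1) * k\<^sup>2)"

definition Kl' :: "real \<Rightarrow> real \<Rightarrow> real \<Rightarrow> nat \<Rightarrow> real" where
  "Kl' c D k l = sqrt (c\<^sup>2 * real l * (real l + 1) * k\<^sup>2 - c ^ 4 / (4 * D\<^sup>2))"

definition Al :: "real \<Rightarrow> real \<Rightarrow> real \<Rightarrow> nat \<Rightarrow> real \<Rightarrow> real" where
  "Al c D k l t =
     (if real l \<le> lstar c D k then
        cosh (t * Kl c D k l)
        + c\<^sup>2 / (2 * D) * (if Kl c D k l = 0 then t else sinh (t * Kl c D k l) / Kl c D k l)
      else 0)"

definition Bl :: "real \<Rightarrow> real \<Rightarrow> real \<Rightarrow> nat \<Rightarrow> real \<Rightarrow> real" where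
  "Bl c D k l t =
     (if real l > lstar c D k then
        cos (t * Kl' c D k l) + c\<^sup>2 / (2 * D * Kl' c D k l) * sin (t * Kl' c D k l)
      else 0)"

definition xi_coef :: "real \<Rightarrow> real \<Rightarrow> real \<Rightarrow> (nat \<Rightarrow> int \<Rightarrow> 'w \<Rightarrow> complex)
                        \<Rightarrow> nat \<Rightarrow> int \<Rightarrow> real \<Rightarrow> 'w \<Rightarrow> complex" where
  "xi_coef c D k a l m t \<omega> =
     complex_of_real (sqrt (4 * pi / (2 * real l + 1))) * a l m \<omega> * cnj (sph_harm l 0 0 0)
       * complex_of_real (Al c D k l t + Bl c D k l t)"

definition u_trunc :: "real \<Rightarrow> real \<Rightarrow> real \<Rightarrow> (nat \<Rightarrow> int \<Rightarrow> 'w \<Rightarrow> complex)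
                        \<Rightarrow> nat \<Rightarrow> real \<Rightarrow> real \<Rightarrow> real \<Rightarrow> 'w \<Rightarrow> complex" where
  "u_trunc c D k a L \<theta> \<phi> t \<omega> =
     complex_of_real (exp (- (c\<^sup>2 * t) / (2 * D))) *
       (\<Sum>l<L. \<Sum>m\<in>{- int l..int l}. sph_harm l m \<theta> \<phi> * xi_coef c D k a l m t \<omega>)"

definition centered_gaussian_rv :: "'w measure \<Rightarrow> ('w \<Rightarrow> real) \<Rightarrow> bool" where
  "centered_gaussian_rv M X \<longleftrightarrow>
     X \<in> borel_measurable M \<and>
     ((AE \<omega> in M. X \<omega> = 0) \<or> (\<exists>\<sigma>>0. distributed M lborel X (normal_density 0 \<sigma>)))"

definition jointly_gaussian_coeffs :: "'w measure \<Rightarrow> (nat \<Rightarrow> int \<Rightarrow> 'w \<Rightarrow> complex) \<Rightarrow> bool" where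
  "jointly_gaussian_coeffs M a \<longleftrightarrow>
     (\<forall>F (\<alpha> :: nat \<Rightarrow> int \<Rightarrow> real) (\<beta> :: nat \<Rightarrow> int \<Rightarrow> real).
        finite F \<longrightarrow> F \<subseteq> {(l, m). \<bar>m\<bar> \<le> int l} \<longrightarrow>
        centered_gaussian_rv M
          (\<lambda>\<omega>. \<Sum>(l, m)\<in>F. \<alpha> l m * Re (a l m \<omega>) + \<beta> l m * Im (a l m \<omega>)))"

definition isotropic_gaussian_coeffs ::
  "'w measure \<Rightarrow> (nat \<Rightarrow> int \<Rightarrow> 'w \<Rightarrow> complex) \<Rightarrow> (nat \<Rightarrow> real) \<Rightarrow> bool" where
  "isotropic_gaussian_coeffs M a C \<longleftrightarrow>
     prob_space M \<and>
     (\<forall>l m. \<bar>m\<bar> \<le> int l \<longrightarrow> a l m \<in> borel_measurable M) \<and>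
     (\<forall>l m. \<bar>m\<bar> \<le> int l \<longrightarrow> integrable M (\<lambda>\<omega>. (cmod (a l m \<omega>))\<^sup>2)) \<and>
     jointly_gaussian_coeffs M a \<and>
     (\<forall>l m \<omega>. \<bar>m\<bar> \<le> int l \<longrightarrow> a l (- m) \<omega> = (-1) ^ nat \<bar>m\<bar> * cnj (a l m \<omega>)) \<and>
     (\<forall>l m. \<bar>m\<bar> \<le> int l \<longrightarrow> (\<integral>\<omega>. a l m \<omega> \<partial>M) = 0) \<and>
     (\<forall>l m l' m'. \<bar>m\<bar> \<le> int l \<longrightarrow> \<bar>m'\<bar> \<le> int l' \<longrightarrow>
        (\<integral>\<omega>. a l m \<omega> * cnj (a l' m' \<omega>) \<partial>M) = (if l = l' \<and> m = m' then complex_of_real (C l) else 0)) \<and>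
     (\<forall>l m l' m'. \<bar>m\<bar> \<le> int l \<longrightarrow> \<bar>m'\<bar> \<le> int l' \<longrightarrow>
        (l, m) \<noteq> (l', m') \<longrightarrow> (l, m) \<noteq> (l', - m') \<longrightarrow>
        prob_space.indep_var M borel (a l m) borel (a l' m')) \<and>
     summable (\<lambda>l. (2 * real l + 1) * C l)"

end

theory Submission
  imports Defs
begin

lemma lrp_Suc: "legendre_rodrigues_poly l (Suc k) = pderiv (legendre_rodrigues_poly l k)"
  by (simp add: legendre_rodrigues_poly_def)

lemma lrp_0: "legendre_rodrigues_poly l 0 = [:-1,0,1:]^l"
  by (simp add: legendre_rodrigues_poly_def)

lemma pdX2: "pderiv [:-1,0,1::real:] = [:0,2:]"
  by (simp add: pderiv_pCons)
lemma pdX: "pderiv [:0,1::real:] = 1"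
  by (simp add: pderiv_pCons)
lemma pdX1: "pderiv [:-1,1::real:] = 1"
  by (simp add: pderiv_pCons)
lemma pd1: "pderiv ([:-1,0,1::real:] * p) = [:-1,0,1:] * pderiv p + [:0,2:] * p"
  by (simp only: pderiv_mult pdX2 mult.commute)
lemma pd2: "pderiv ([:0,1::real:] * p) = [:0,1:] * pderiv p + p"
  by (simp only: pderiv_mult pdX mult.commute mult_1)
lemma lrpS: "pderiv (legendre_rodrigues_poly l k) = legendre_rodrigues_poly l (Suc k)"
  by (simp add: legendre_rodrigues_poly_def)

lemma polyeq: "(\<And>x. poly p x = poly q x) \<Longrightarrow> p = (q::real poly)"
proof -
  assume "\<And>x. poly p x = poly q x"
  then have "poly p = poly q" by (rule ext)
  then show ?thesis by (simp add: poly_eq_poly_eq_iff)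
qed

lemma lrp_base: "[:-1,0,1::real:] * pderiv ([:-1,0,1:]^l) = smult (2 * real l) ([:0,1:] * [:-1,0,1:]^l)"
proof (cases l)
  case 0 then show ?thesis by simp
next
  case (Suc n)
  have "pderiv ([:-1,0,1::real:]^l) = smult (real l) ([:-1,0,1:]^n) * [:0,2:]"
    by (simp only: Suc pderiv_power_Suc) (simp add: pderiv_pCons)
  then show ?thesis
    apply (simp only:)
    apply (rule polyeq)
    apply (simp add: Suc algebra_simps)
    done
qed

definition ErecP :: "nat \<Rightarrow> nat \<Rightarrow> real poly" where
  "ErecP l n = [:-1,0,1:] * legendre_rodrigues_poly l (n+2)
     + smult (2*(real n + 1 - real l)) ([:0,1:] * legendre_rodrigues_poly l (n+1))
     + smult ((real n+1)*real n - 2*real l*(real n+1)) (legendre_rodrigues_poly l n)"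

lemma ErecP_Suc: "pderiv (ErecP l n) = ErecP l (Suc n)"
  unfolding ErecP_def
  apply (simp only: pderiv_add pderiv_smult pd1 pd2 lrpS)
  apply (rule polyeq)
  apply (simp add: algebra_simps)
  done

lemma ErecP_0: "ErecP l 0 = 0"
proof -
  have "pderiv ([:-1,0,1::real:] * pderiv ([:-1,0,1:]^l) - smult (2 * real l) ([:0,1:] * [:-1,0,1:]^l)) = 0"
    using lrp_base by simp
  then have "pderiv ([:-1,0,1::real:] * legendre_rodrigues_poly l 1 - smult (2 * real l) ([:0,1:] * legendre_rodrigues_poly l 0)) = 0"
    by (simp add: lrp_0 lrpS[symmetric])
  then have "[:-1,0,1::real:] * legendre_rodrigues_poly l 2 + [:0,2:] * legendre_rodrigues_poly l 1
      - smult (2 * real l) ([:0,1:] * legendre_rodrigues_poly l 1 + legendre_rodrigues_poly l 0) = 0"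
    by (simp only: pderiv_diff pderiv_smult pd1 pd2 lrpS numeral_2_eq_2 One_nat_def)
  then have "\<And>x. poly ([:-1,0,1::real:] * legendre_rodrigues_poly l 2 + [:0,2:] * legendre_rodrigues_poly l 1
      - smult (2 * real l) ([:0,1:] * legendre_rodrigues_poly l 1 + legendre_rodrigues_poly l 0)) x = 0"
    by simp
  then show ?thesis unfolding ErecP_def
    apply (intro polyeq)
    apply (simp add: algebra_simps numeral_2_eq_2)
    done
qed

lemma ErecP_zero: "ErecP l n = 0"
  by (induction n) (simp_all add: ErecP_0 flip: ErecP_Suc)

lemma rec_eval:
  "(x^2 - 1) * poly (legendre_rodrigues_poly l (n+2)) x
     + 2*(real n + 1 - real l) * x * poly (legendre_rodrigues_poly l (n+1)) x
     + ((real n+1)*real n - 2*real l*(real n+1)) * poly (legendre_rodrigues_poly l n) x = 0"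
proof -
  have "poly (ErecP l n) x = 0" by (simp add: ErecP_zero)
  then show ?thesis unfolding ErecP_def by (simp add: algebra_simps power2_eq_square)
qed

lemma degree_lrp: "degree (legendre_rodrigues_poly l k) = 2*l - k"
proof (induction k)
  case 0
  have "degree ([:-1,0,1::real:]^l) = l * degree [:-1,0,1::real:]"
    by (rule degree_power_eq) simp
  then show ?case by (simp add: lrp_0)
next
  case (Suc k) then show ?case by (simp add: lrp_Suc degree_pderiv)
qed

lemma lrp_top: "legendre_rodrigues_poly l (2*l+1) = 0"
  using degree_lrp[of l "2*l"] by (simp add: lrp_Suc pderiv_eq_0_iff)

lemma at_one_aux:
  "(j < n \<longrightarrow> poly ((pderiv ^^ j) ([:-1,1::real:]^n * f)) 1 = 0) \<and>
   (j = n \<longrightarrow> poly ((pderiv ^^ j) ([:-1,1::real:]^n * f)) 1 = fact n * poly f 1)"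
proof (induction n arbitrary: f j)
  case 0 then show ?case by simp
next
  case (Suc n)
  show ?case
  proof (cases j)
    case 0 then show ?thesis by simp
  next
    case (Suc j')
    have d: "pderiv ([:-1,1::real:]^Suc n * f) = [:-1,1:]^n * (smult (real (Suc n)) f + [:-1,1:] * pderiv f)"
      apply (simp only: pderiv_mult pderiv_power_Suc pdX1)
      apply (rule polyeq)
      apply (simp add: algebra_simps)
      done
    have e: "(pderiv ^^ j) ([:-1,1::real:]^Suc n * f) = (pderiv ^^ j') ([:-1,1:]^n * (smult (real (Suc n)) f + [:-1,1:] * pderiv f))"
      by (simp only: Suc funpow_Suc_right o_apply d)
    have IH: "(j' < n \<longrightarrow> poly ((pderiv ^^ j') ([:-1,1::real:]^n * (smult (real (Suc n)) f + [:-1,1:] * pderiv f))) 1 = 0) \<and>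
   (j' = n \<longrightarrow> poly ((pderiv ^^ j') ([:-1,1::real:]^n * (smult (real (Suc n)) f + [:-1,1:] * pderiv f))) 1 = fact n * poly (smult (real (Suc n)) f + [:-1,1:] * pderiv f) 1)"
      by (rule Suc.IH)
    show ?thesis
    proof (intro conjI impI)
      assume "j < Suc n"
      then show "poly ((pderiv ^^ j) ([:-1,1::real:]^Suc n * f)) 1 = 0"
        unfolding e using IH Suc by simp
    next
      assume "j = Suc n"
      then show "poly ((pderiv ^^ j) ([:-1,1::real:]^Suc n * f)) 1 = fact (Suc n) * poly f 1"
        unfolding e using IH Suc by (simp add: algebra_simps)
    qed
  qed
qed

lemma fact_X2: "[:-1,0,1::real:]^l = [:-1,1:]^l * [:1,1:]^l"
proof -
  have "[:-1,1::real:]*[:1,1:] = [:-1,0,1:]" by simp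
  then show ?thesis by (metis power_mult_distrib)
qed

lemma lrp_one: "poly (legendre_rodrigues_poly l l) 1 = 2^l * fact l"
  using at_one_aux[of l l "[:1,1:]^l"]
  by (simp add: legendre_rodrigues_poly_def fact_X2 poly_power)

lemma lrp_low_one: "k < l \<Longrightarrow> poly (legendre_rodrigues_poly l k) 1 = 0"
  using at_one_aux[of k l "[:1,1:]^l"]
  by (simp add: legendre_rodrigues_poly_def fact_X2)


definition QQ :: "nat \<Rightarrow> nat \<Rightarrow> real \<Rightarrow> real" where
  "QQ l j x = poly (legendre_rodrigues_poly l (l+j)) x"
definition vv :: "nat \<Rightarrow> nat \<Rightarrow> real" where
  "vv l j = fact (l-j) / fact (l+j)"
definition DD :: "nat \<Rightarrow> nat \<Rightarrow> real \<Rightarrow> real" where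
  "DD l j x = -2 * real j * x * (1-x^2)^(j-1) * (QQ l j x)^2 + 2 * (1-x^2)^j * QQ l j x * QQ l (Suc j) x"

lemma QQ_rec: "(1-x^2) * QQ l (n+2) x = 2*(real n+1)*x*QQ l (n+1) x - (real l + real n + 1)*(real l - real n) * QQ l n x"
proof -
  have "(x^2 - 1) * poly (legendre_rodrigues_poly l ((l+n)+2)) x
     + 2*(real (l+n) + 1 - real l) * x * poly (legendre_rodrigues_poly l ((l+n)+1)) x
     + ((real (l+n)+1)*real (l+n) - 2*real l*(real (l+n)+1)) * poly (legendre_rodrigues_poly l (l+n)) x = 0"
    by (rule rec_eval)
  then show ?thesis unfolding QQ_def by (simp add: algebra_simps)
qed

lemma vv_step: "n < l \<Longrightarrow> vv l n = vv l (Suc n) * ((real l - real n) * (real l + real n + 1))"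
proof -
  assume "n < l"
  then have a: "fact (l - n) = (real l - real n) * (fact (l - Suc n) :: real)"
    by (metis Suc_diff_Suc fact_Suc of_nat_diff less_imp_le_nat of_nat_mult mult.commute of_nat_fact)
  have b: "fact (l + Suc n) = (real l + real n + 1) * (fact (l + n) :: real)"
    by (simp add: algebra_simps)
  have "fact (l+n) > (0::real)" by simp
  have p: "real l + real n + 1 \<noteq> 0" by simp
  have g: "\<And>A F0 F1 d::real. A \<noteq> 0 \<Longrightarrow> F0 \<noteq> 0 \<Longrightarrow> (d*F1)/F0 = F1/(A*F0) * (d*A)"
    by (simp add: field_simps)
  show ?thesis unfolding vv_def a b by (rule g[OF p]) simp
qed

lemma tele: "n \<le> l \<Longrightarrow> (\<Sum>j\<le>n. vv l j * DD l j x) = QQ l 0 x * QQ l 1 x + vv l n * (1-x^2)^n * QQ l n x * QQ l (Suc n) x"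
proof (induction n)
  case 0 then show ?case by (simp add: DD_def vv_def)
next
  case (Suc n)
  then have nl: "n < l" by simp
  have r: "(1-x^2) * QQ l (n+2) x = 2*(real n+1)*x*QQ l (n+1) x - (real l + real n + 1)*(real l - real n) * QQ l n x"
    by (rule QQ_rec)
  have "vv l (Suc n) * DD l (Suc n) x
     = vv l (Suc n) * (1-x^2)^n * QQ l (Suc n) x * (-2*(real n+1)*x*QQ l (n+1) x + (1-x^2) * QQ l (n+2) x)
       + vv l (Suc n) * (1-x^2)^(Suc n) * QQ l (Suc n) x * QQ l (Suc (Suc n)) x"
    by (simp add: DD_def algebra_simps numeral_2_eq_2)
  also have "\<dots> = - (vv l (Suc n) * ((real l - real n) * (real l + real n + 1))) * (1-x^2)^n * QQ l (Suc n) x * QQ l n x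
       + vv l (Suc n) * (1-x^2)^(Suc n) * QQ l (Suc n) x * QQ l (Suc (Suc n)) x"
    unfolding r by (simp add: algebra_simps)
  also have "\<dots> = - vv l n * (1-x^2)^n * QQ l (Suc n) x * QQ l n x
       + vv l (Suc n) * (1-x^2)^(Suc n) * QQ l (Suc n) x * QQ l (Suc (Suc n)) x"
    using vv_step[OF nl] by simp
  finally show ?case using Suc nl by (simp add: algebra_simps)
qed

definition FF :: "nat \<Rightarrow> real \<Rightarrow> real" where
  "FF l x = 2 * (\<Sum>j\<le>l. vv l j * (1-x^2)^j * (QQ l j x)^2) - (QQ l 0 x)^2"

lemma QQ_deriv: "DERIV (QQ l j) x :> QQ l (Suc j) x"
proof -
  have "DERIV (\<lambda>x. poly (legendre_rodrigues_poly l (l+j)) x) x :> poly (pderiv (legendre_rodrigues_poly l (l+j))) x"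
    by (rule poly_DERIV)
  then show ?thesis unfolding QQ_def by (simp add: lrpS)
qed

lemma term_deriv: "DERIV (\<lambda>x. (1-x^2)^j * (QQ l j x)^2) x :> DD l j x"
proof -
  have h1: "DERIV (\<lambda>x. (QQ l j x)^2) x :> of_nat 2 * (QQ l (Suc j) x * QQ l j x ^ (2 - Suc 0))"
    by (rule DERIV_power[OF QQ_deriv])
  have h0: "DERIV (\<lambda>x. 1-x^2) x :> 0 - of_nat 2 * (1 * x ^ (2 - Suc 0))"
    by (rule DERIV_diff[OF DERIV_const DERIV_power[OF DERIV_ident]])
  have h2: "DERIV (\<lambda>x. (1-x^2)^j) x :> of_nat j * ((0 - of_nat 2 * (1 * x ^ (2 - Suc 0))) * (1-x^2)^(j - Suc 0))"
    by (rule DERIV_power[OF h0])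
  show ?thesis
    by (rule DERIV_cong[OF DERIV_mult[OF h2 h1]]) (simp add: DD_def algebra_simps)
qed

lemma QQ_top: "QQ l (Suc l) x = 0"
proof -
  have e: "l + Suc l = 2*l+1" by simp
  show ?thesis unfolding QQ_def e lrp_top by simp
qed

lemma FF_deriv: "DERIV (FF l) x :> 0"
proof -
  have hs: "DERIV (\<lambda>x. \<Sum>j\<le>l. vv l j * ((1-x^2)^j * (QQ l j x)^2)) x :> (\<Sum>j\<le>l. vv l j * DD l j x)"
    by (rule DERIV_sum) (rule DERIV_cmult[OF term_deriv])
  have hq: "DERIV (\<lambda>x. (QQ l 0 x)^2) x :> of_nat 2 * (QQ l (Suc 0) x * QQ l 0 x ^ (2 - Suc 0))"
    by (rule DERIV_power[OF QQ_deriv])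
  have "DERIV (FF l) x :> 2 * (\<Sum>j\<le>l. vv l j * DD l j x) - of_nat 2 * (QQ l (Suc 0) x * QQ l 0 x ^ (2 - Suc 0))"
    unfolding FF_def[abs_def] using DERIV_diff[OF DERIV_cmult[OF hs] hq] by (simp add: mult.assoc)
  moreover have "2 * (\<Sum>j\<le>l. vv l j * DD l j x) - of_nat 2 * (QQ l (Suc 0) x * QQ l 0 x ^ (2 - Suc 0)) = 0"
    using tele[of l l x] QQ_top[of l x] by simp
  ultimately show ?thesis by simp
qed

lemma FF_const: "FF l x = (2^l * fact l)^2"
proof -
  have "FF l x = FF l 1" using DERIV_isconst_all FF_deriv by blast
  also have "FF l 1 = 2 * (vv l 0 * (QQ l 0 1)^2) - (QQ l 0 1)^2"
    unfolding FF_def by (subst sum.atMost_shift) (simp add: atMost_atLeast0)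
  also have "\<dots> = (2^l * fact l)^2" by (simp add: vv_def QQ_def lrp_one)
  finally show ?thesis .
qed


lemma assoc_nonneg_sq: "x^2 \<le> 1 \<Longrightarrow>
  (assoc_legendre_nonneg l j x)^2 = (1-x^2)^j * (QQ l j x)^2 / (2^l * fact l)^2"
proof -
  assume "x^2 \<le> 1"
  then have "(sqrt (1-x^2) ^ j)^2 = (1-x^2)^j"
    by (simp add: power_mult_distrib[symmetric] power_mult[symmetric] mult.commute[of j] power_mult)
  then show ?thesis unfolding assoc_legendre_nonneg_def QQ_def
    by (simp add: power_mult_distrib power_divide)
qed

lemma cmod_sph: "(cmod (sph_harm l m \<theta> \<phi>))^2 = (sph_const l m)^2 * (assoc_legendre l m (cos \<theta>))^2"
  unfolding sph_harm_def by (simp add: norm_mult power_mult_distrib)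

lemma Ysq_pos: "j \<le> l \<Longrightarrow> (cmod (sph_harm l (int j) \<theta> \<phi>))^2 =
   (2*real l+1)/(4*pi) * (vv l j * (1-(cos \<theta>)^2)^j * (QQ l j (cos \<theta>))^2 / (2^l * fact l)^2)"
proof -
  assume "j \<le> l"
  have s1: "((- 1::real) ^ j)^2 = 1" by (simp add: power2_eq_square power_mult_distrib[symmetric])
  have s2: "nat (int l + int j) = l + j" by (simp add: nat_int_add)
  have x: "(cos \<theta>)^2 \<le> 1" using sin_cos_squared_add[of \<theta>] zero_le_power2[of "sin \<theta>"] by linarith
  have "(sph_const l (int j))^2 = (2 * real l + 1) * fact (l - j) / (4 * pi * fact (l + j))"
    unfolding sph_const_def using \<open>j\<le>l\<close>
    by (simp add: power_mult_distrib nat_diff_distrib' of_nat_diff s1 s2)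
  then show ?thesis unfolding cmod_sph assoc_legendre_def
    by (simp add: assoc_nonneg_sq[OF x] vv_def)
qed

lemma Ysq_neg: "j \<le> l \<Longrightarrow> (cmod (sph_harm l (- int j) \<theta> \<phi>))^2 =
   (2*real l+1)/(4*pi) * (vv l j * (1-(cos \<theta>)^2)^j * (QQ l j (cos \<theta>))^2 / (2^l * fact l)^2)"
proof -
  assume "j \<le> l"
  have s1: "((- 1::real) ^ j)^2 = 1" by (simp add: power2_eq_square power_mult_distrib[symmetric])
  have s2: "nat (int l + int j) = l + j" by (simp add: nat_int_add)
  have x: "(cos \<theta>)^2 \<le> 1" using sin_cos_squared_add[of \<theta>] zero_le_power2[of "sin \<theta>"] by linarith
  have "(sph_const l (- int j))^2 = (2 * real l + 1) * fact (l + j) / (4 * pi * fact (l - j))"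
    unfolding sph_const_def using \<open>j\<le>l\<close>
    by (simp add: power_mult_distrib nat_diff_distrib' of_nat_diff s1 s2)
  moreover have "(assoc_legendre l (- int j) (cos \<theta>))^2 = (fact (l-j) / fact (l+j))^2 * (assoc_legendre_nonneg l j (cos \<theta>))^2"
    unfolding assoc_legendre_def by (cases "j = 0") (simp_all add: power_mult_distrib power_divide s1)
  moreover have g: "\<And>c F1 F2 X::real. F1 \<noteq> 0 \<Longrightarrow> F2 \<noteq> 0 \<Longrightarrow>
      (c*F2/(4*pi*F1)) * ((F1/F2)^2 * X) = c/(4*pi) * (F1/F2 * X)"
    by (simp add: field_simps power2_eq_square)
  ultimately show ?thesis unfolding cmod_sph
    by (simp add: g assoc_nonneg_sq[OF x] vv_def mult.assoc)
qed

lemma sum_int_split: "(\<Sum>m\<in>{- int l..int l}. g m) = (\<Sum>j\<le>l. g (int j)) + (\<Sum>j\<in>{1..l}. g (- int j))"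
proof -
  have e: "{- int l..int l} = int ` {..l} \<union> (\<lambda>j. - int j) ` {1..l}"
  proof (rule set_eqI, rule iffI)
    fix m assume "m \<in> {- int l..int l}"
    then show "m \<in> int ` {..l} \<union> (\<lambda>j. - int j) ` {1..l}"
    proof (cases "m \<ge> 0")
      case True then show ?thesis using \<open>m \<in> _\<close> by (auto intro!: image_eqI[of _ _ "nat m"])
    next
      case False then show ?thesis using \<open>m \<in> _\<close> by (auto intro!: image_eqI[of _ _ "nat (-m)"])
    qed
  qed auto
  have d: "int ` {..l} \<inter> (\<lambda>j. - int j) ` {1..l} = {}" by auto
  have "(\<Sum>m\<in>{- int l..int l}. g m) = sum g (int ` {..l}) + sum g ((\<lambda>j. - int j) ` {1..l})"
    unfolding e by (rule sum.union_disjoint) (use d in auto)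
  also have "\<dots> = (\<Sum>j\<le>l. g (int j)) + (\<Sum>j\<in>{1..l}. g (- int j))"
    by (subst sum.reindex, simp add: inj_on_def)+ simp
  finally show ?thesis .
qed

lemma sph_sum: "(\<Sum>m\<in>{- int l..int l}. (cmod (sph_harm l m \<theta> \<phi>))^2) = (2*real l+1)/(4*pi)"
proof -
  define T where "T j = vv l j * (1-(cos \<theta>)^2)^j * (QQ l j (cos \<theta>))^2" for j
  define N :: real where "N = (2^l * fact l)^2"
  define c where "c = (2*real l+1)/(4*pi)"
  have "(\<Sum>m\<in>{- int l..int l}. (cmod (sph_harm l m \<theta> \<phi>))^2)
     = (\<Sum>j\<le>l. c * (T j / N)) + (\<Sum>j\<in>{1..l}. c * (T j / N))"
    unfolding sum_int_split T_def N_def c_def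
    by (intro arg_cong2[where f="(+)"] sum.cong refl) (simp_all add: Ysq_pos Ysq_neg)
  also have "(\<Sum>j\<in>{1..l}. c * (T j / N)) = (\<Sum>j\<le>l. c * (T j / N)) - c * (T 0 / N)"
  proof -
    have "{..l} = insert 0 {1..l}" by auto
    then show ?thesis by simp
  qed
  also have "(\<Sum>j\<le>l. c * (T j / N)) + ((\<Sum>j\<le>l. c * (T j / N)) - c * (T 0 / N))
     = c / N * (2 * (\<Sum>j\<le>l. T j) - T 0)"
    by (simp add: sum_distrib_left[symmetric] algebra_simps sum_divide_distrib[symmetric])
  also have "2 * (\<Sum>j\<le>l. T j) - T 0 = FF l (cos \<theta>)"
    unfolding FF_def T_def by (simp add: vv_def)
  also have "\<dots> = N" unfolding N_def by (rule FF_const)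
  finally show ?thesis unfolding c_def N_def by simp
qed

lemma Y00: "sph_harm l 0 0 0 = complex_of_real (sqrt ((2*real l+1)/(4*pi)))"
  unfolding sph_harm_def sph_const_def assoc_legendre_def assoc_legendre_nonneg_def
  by (simp add: lrp_one)

lemma lstar_prod:
  assumes "c > 0" "D > 0" "k > 0"
  shows "lstar c D k * (lstar c D k + 1) = c^2 / (4 * D^2 * k^2)"
proof -
  define s where "s = sqrt (D\<^sup>2 * k\<^sup>2 + c\<^sup>2)"
  have s2: "s^2 = D^2*k^2 + c^2" unfolding s_def by simp
  have l1: "lstar c D k + 1 = (s + D*k) / (2*D*k)"
    unfolding lstar_def s_def[symmetric] using assms by (simp add: field_simps)
  have "lstar c D k * (lstar c D k + 1) = (s - D*k) * (s + D*k) / (2*D*k)^2"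
    unfolding l1 unfolding lstar_def s_def[symmetric] by (simp add: power2_eq_square)
  also have "\<dots> = (s^2 - (D*k)^2) / (2*D*k)^2" by (simp add: algebra_simps power2_eq_square)
  also have "\<dots> = c^2 / (4 * D^2 * k^2)" unfolding s2 by (simp add: power_mult_distrib)
  finally show ?thesis .
qed

lemma lstar_pos:
  assumes "c > 0" "D > 0" "k > 0"
  shows "lstar c D k > 0"
proof -
  have "sqrt ((D*k)^2) < sqrt (D\<^sup>2 * k\<^sup>2 + c\<^sup>2)"
    using assms by (simp add: power_mult_distrib)
  then have "D*k < sqrt (D\<^sup>2 * k\<^sup>2 + c\<^sup>2)" using assms by simp
  then show ?thesis unfolding lstar_def using assms by simp
qed

lemma Kl_props:
  assumes "c > 0" "D > 0" "k > 0" "real l \<le> lstar c D k"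
  shows "0 \<le> Kl c D k l" "Kl c D k l \<le> c^2/(2*D)"
proof -
  have "real l * (real l + 1) \<le> lstar c D k * (lstar c D k + 1)"
    using assms(4) by (intro mult_mono) auto
  then have "c^2 * k^2 * (real l * (real l + 1)) \<le> c^2 * k^2 * (c^2 / (4 * D^2 * k^2))"
    using lstar_prod[OF assms(1-3)] by (intro mult_left_mono) auto
  also have "\<dots> = c^4 / (4*D^2)" using assms by (simp add: field_simps power2_eq_square eval_nat_numeral)
  finally have a: "c\<^sup>2 * real l * (real l + 1) * k\<^sup>2 \<le> c^4 / (4*D^2)" by (simp add: algebra_simps)
  then show "0 \<le> Kl c D k l" unfolding Kl_def by simp
  have "Kl c D k l \<le> sqrt (c^4 / (4*D^2))" unfolding Kl_def
    by (rule real_sqrt_le_mono) (simp add: mult_nonneg_nonneg)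
  also have "c^4 / (4*D^2) = (c^2/(2*D))^2" by (simp add: power2_eq_square field_simps eval_nat_numeral)
  finally show "Kl c D k l \<le> c^2/(2*D)" using assms by simp
qed

lemma Kl'_props:
  assumes "c > 0" "D > 0" "k > 0" "real l > lstar c D k"
  shows "0 < Kl' c D k l"
proof -
  have "real l * (real l + 1) > lstar c D k * (lstar c D k + 1)"
    using assms(4) lstar_pos[OF assms(1-3)] by (intro mult_strict_mono) auto
  then have "c^2 * k^2 * (real l * (real l + 1)) > c^2 * k^2 * (c^2 / (4 * D^2 * k^2))"
    using lstar_prod[OF assms(1-3)] assms by (intro mult_strict_left_mono) auto
  also have "c^2 * k^2 * (c^2 / (4 * D^2 * k^2)) = c^4 / (4*D^2)" using assms by (simp add: field_simps power2_eq_square eval_nat_numeral)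
  finally have a: "c\<^sup>2 * real l * (real l + 1) * k\<^sup>2 > c^4 / (4*D^2)" by (simp add: algebra_simps)
  then show ?thesis unfolding Kl'_def by simp
qed

lemma Kl'_mono:
  assumes "l1 \<le> l"
  shows "Kl' c D k l1 \<le> Kl' c D k l"
proof -
  have "real l1 * (real l1 + 1) \<le> real l * (real l + 1)"
    using assms by (intro mult_mono) auto
  then have "c^2 * k^2 * (real l1 * (real l1 + 1)) \<le> c^2 * k^2 * (real l * (real l + 1))"
    by (intro mult_left_mono) auto
  then show ?thesis unfolding Kl'_def by (intro real_sqrt_le_mono) (simp add: algebra_simps)
qed

definition Kb :: "real \<Rightarrow> real \<Rightarrow> real \<Rightarrow> real" where
  "Kb c D k = 2 + (\<Sum>l\<le>nat \<lfloor>lstar c D k\<rfloor>. (c^2/(2*D)) / (2 * Kl c D k l))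
     + (c^2/(2*D)) / Kl' c D k (Suc (nat \<lfloor>lstar c D k\<rfloor>))"

lemma Kb_parts:
  assumes "c > 0" "D > 0" "k > 0"
  shows "Kl' c D k (Suc (nat \<lfloor>lstar c D k\<rfloor>)) > 0"
    "\<And>l. real l \<le> lstar c D k \<Longrightarrow> (c^2/(2*D)) / (2 * Kl c D k l) \<le> (\<Sum>l\<le>nat \<lfloor>lstar c D k\<rfloor>. (c^2/(2*D)) / (2 * Kl c D k l))"
    "(\<Sum>l\<le>nat \<lfloor>lstar c D k\<rfloor>. (c^2/(2*D)) / (2 * Kl c D k l)) \<ge> 0"
proof -
  show "Kl' c D k (Suc (nat \<lfloor>lstar c D k\<rfloor>)) > 0"
    using assms lstar_pos[OF assms]
    by (intro Kl'_props) (auto, linarith)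
  have nn: "\<And>l. l \<le> nat \<lfloor>lstar c D k\<rfloor> \<Longrightarrow> (c^2/(2*D)) / (2 * Kl c D k l) \<ge> 0"
  proof -
    fix l assume "l \<le> nat \<lfloor>lstar c D k\<rfloor>"
    then have "real l \<le> lstar c D k" using lstar_pos[OF assms] by linarith
    then show "(c^2/(2*D)) / (2 * Kl c D k l) \<ge> 0" using Kl_props[OF assms] assms by simp
  qed
  then show "(\<Sum>l\<le>nat \<lfloor>lstar c D k\<rfloor>. (c^2/(2*D)) / (2 * Kl c D k l)) \<ge> 0"
    by (intro sum_nonneg) auto
  fix l assume "real l \<le> lstar c D k"
  then have "l \<le> nat \<lfloor>lstar c D k\<rfloor>" by linarith
  then show "(c^2/(2*D)) / (2 * Kl c D k l) \<le> (\<Sum>l\<le>nat \<lfloor>lstar c D k\<rfloor>. (c^2/(2*D)) / (2 * Kl c D k l))"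
    using nn by (intro member_le_sum) auto
qed

lemma g_bound_high:
  assumes "c > 0" "D > 0" "k > 0" "real l > lstar c D k"
  shows "\<bar>Al c D k l t + Bl c D k l t\<bar> \<le> Kb c D k"
proof -
  define a where "a = c^2/(2*D)"
  define K where "K = Kl' c D k l"
  define K1 where "K1 = Kl' c D k (Suc (nat \<lfloor>lstar c D k\<rfloor>))"
  have a0: "a > 0" unfolding a_def using assms by simp
  have K1p: "K1 > 0" unfolding K1_def using Kb_parts[OF assms(1-3)] by simp
  have "Suc (nat \<lfloor>lstar c D k\<rfloor>) \<le> l" using assms(4) lstar_pos[OF assms(1-3)] by linarith
  then have KK: "K1 \<le> K" unfolding K_def K1_def by (rule Kl'_mono)
  have "\<bar>Al c D k l t + Bl c D k l t\<bar> = \<bar>cos (t*K) + a / K * sin (t*K)\<bar>"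
    unfolding Al_def Bl_def K_def a_def using assms(4) by (simp add: mult.assoc)
  also have "\<dots> \<le> 1 + a / K * 1"
  proof -
    have aK: "a / K \<ge> 0" using a0 K1p KK by simp
    have Kp: "K > 0" using K1p KK by simp
    have "\<bar>a / K * sin (t*K)\<bar> = a / K * \<bar>sin (t*K)\<bar>" using a0 Kp by (simp add: abs_mult)
    also have "\<dots> \<le> a / K * 1" using aK abs_sin_le_one[of "t*K"] by (rule mult_left_mono[rotated])
    finally show ?thesis using abs_cos_le_one[of "t*K"] abs_triangle_ineq[of "cos (t*K)" "a / K * sin (t*K)"]
      by linarith
  qed
  also have "\<dots> \<le> 1 + a / K1" using a0 K1p KK by (simp add: frac_le)
  also have "\<dots> \<le> Kb c D k" unfolding Kb_def a_def[symmetric] K1_def[symmetric]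
    using Kb_parts(3)[OF assms(1-3)] by (simp add: a_def)
  finally show ?thesis .
qed

lemma g_bound_low:
  assumes "c > 0" "D > 0" "k > 0" "real l \<le> lstar c D k" "t > 0"
  shows "exp (- (c\<^sup>2 * t) / (2 * D)) * \<bar>Al c D k l t + Bl c D k l t\<bar> \<le> Kb c D k"
proof -
  define a where "a = c^2/(2*D)"
  define K where "K = Kl c D k l"
  have a0: "a > 0" unfolding a_def using assms by simp
  have K0: "0 \<le> K" "K \<le> a" unfolding K_def a_def using Kl_props[OF assms(1-4)] by auto
  have ex: "exp (- (c\<^sup>2 * t) / (2 * D)) = exp (- (a*t))" unfolding a_def by simp
  define X where "X = (if K = 0 then t else sinh (t * K) / K)"
  have g: "Al c D k l t + Bl c D k l t = cosh (t*K) + a * X"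
    unfolding Al_def Bl_def K_def a_def X_def using assms(4) by simp
  have X0: "X \<ge> 0" unfolding X_def using K0 assms(5) by auto
  have c1: "exp (- (a*t)) * cosh (t*K) \<le> 1"
  proof -
    have tk: "t*K \<ge> 0" using K0 assms(5) by simp
    then have "exp (- (t*K)) \<le> exp (t*K)" by simp
    then have "cosh (t*K) \<le> exp (t*K)" unfolding cosh_def by simp
    then have "exp (- (a*t)) * cosh (t*K) \<le> exp (- (a*t)) * exp (t*K)" by simp
    also have "\<dots> = exp (t*K - a*t)" by (simp add: exp_add[symmetric])
    also have "\<dots> \<le> 1" using K0 assms(5) by (simp add: mult_left_mono mult.commute)
    finally show ?thesis .
  qed
  have c2: "exp (- (a*t)) * (a * X) \<le> 1 + (\<Sum>l\<le>nat \<lfloor>lstar c D k\<rfloor>. a / (2 * Kl c D k l))"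
  proof (cases "K = 0")
    case True
    have "a*t \<le> exp (a*t)" using exp_ge_add_one_self[of "a*t"] by linarith
    then have "exp (- (a*t)) * (a * t) \<le> exp (- (a*t)) * exp (a*t)" by simp
    also have "\<dots> = 1" by (simp add: exp_minus field_simps)
    finally show ?thesis using True Kb_parts(3)[OF assms(1-3)] unfolding X_def a_def by simp
  next
    case False
    then have Kp: "K > 0" using K0 by simp
    have "sinh (t*K) \<le> exp (t*K) / 2" unfolding sinh_def by simp
    then have "sinh (t*K) / K \<le> exp (t*K) / 2 / K" using Kp by (intro divide_right_mono) simp_all
    then have "X \<le> exp (t*K) / 2 / K" unfolding X_def using False by simp
    then have "a * X \<le> a * (exp (t*K) / 2 / K)" using a0 by (intro mult_left_mono) auto
    then have "exp (- (a*t)) * (a * X) \<le> exp (- (a*t)) * (a * (exp (t*K) / 2 / K))"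
      by (rule mult_left_mono) auto
    also have "\<dots> = exp (t*K - a*t) * (a / (2*K))" by (simp add: exp_diff exp_minus field_simps)
    also have "\<dots> \<le> 1 * (a / (2*K))"
      using K0 assms(5) a0 Kp by (intro mult_right_mono) (simp_all add: mult_left_mono mult.commute)
    also have "\<dots> \<le> (\<Sum>l\<le>nat \<lfloor>lstar c D k\<rfloor>. a / (2 * Kl c D k l))"
      using Kb_parts(2)[OF assms(1-3) assms(4)] unfolding a_def K_def by simp
    finally show ?thesis by simp
  qed
  have "exp (- (c\<^sup>2 * t) / (2 * D)) * \<bar>Al c D k l t + Bl c D k l t\<bar> = exp (- (a*t)) * cosh (t*K) + exp (- (a*t)) * (a * X)"
    unfolding ex g using X0 a0 by (simp add: abs_of_nonneg distrib_left add_nonneg_nonneg)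
  also have "\<dots> \<le> 2 + (\<Sum>l\<le>nat \<lfloor>lstar c D k\<rfloor>. a / (2 * Kl c D k l))" using c1 c2 by simp
  also have "\<dots> \<le> Kb c D k" unfolding Kb_def a_def
    using Kb_parts(1)[OF assms(1-3)] assms by simp
  finally show ?thesis .
qed

lemma g_bound:
  assumes "c > 0" "D > 0" "k > 0" "t > 0"
  shows "exp (- (c\<^sup>2 * t) / (2 * D)) * \<bar>Al c D k l t + Bl c D k l t\<bar> \<le> Kb c D k"
proof (cases "real l \<le> lstar c D k")
  case True then show ?thesis using g_bound_low assms by blast
next
  case False
  then have "\<bar>Al c D k l t + Bl c D k l t\<bar> \<le> Kb c D k" using g_bound_high assms by simp
  moreover have "exp (- (c\<^sup>2 * t) / (2 * D)) \<le> 1" using assms by simp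
  ultimately have "exp (- (c\<^sup>2 * t) / (2 * D)) * \<bar>Al c D k l t + Bl c D k l t\<bar> \<le> 1 * \<bar>Al c D k l t + Bl c D k l t\<bar>"
    by (intro mult_right_mono) auto
  then show ?thesis using \<open>\<bar>Al c D k l t + Bl c D k l t\<bar> \<le> Kb c D k\<close> by simp
qed

lemma iso_parts:
  assumes "isotropic_gaussian_coeffs M a Cl"
  shows "prob_space M"
    "\<And>l m. \<bar>m\<bar> \<le> int l \<Longrightarrow> a l m \<in> borel_measurable M"
    "\<And>l m. \<bar>m\<bar> \<le> int l \<Longrightarrow> integrable M (\<lambda>\<omega>. (cmod (a l m \<omega>))\<^sup>2)"
    "\<And>l m l' m'. \<bar>m\<bar> \<le> int l \<Longrightarrow> \<bar>m'\<bar> \<le> int l' \<Longrightarrow>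
        (\<integral>\<omega>. a l m \<omega> * cnj (a l' m' \<omega>) \<partial>M) = (if l = l' \<and> m = m' then complex_of_real (Cl l) else 0)"
    "summable (\<lambda>l. (2 * real l + 1) * Cl l)"
  using assms unfolding isotropic_gaussian_coeffs_def by auto

lemma Cl_nonneg:
  assumes "isotropic_gaussian_coeffs M a Cl"
  shows "Cl l \<ge> 0"
proof -
  have "complex_of_real (Cl l) = (\<integral>\<omega>. a l 0 \<omega> * cnj (a l 0 \<omega>) \<partial>M)"
    using iso_parts(4)[OF assms, of 0 l 0 l] by simp
  also have "\<dots> = (\<integral>\<omega>. complex_of_real ((cmod (a l 0 \<omega>))\<^sup>2) \<partial>M)"
    by (simp only: complex_norm_square)
  also have "\<dots> = complex_of_real (\<integral>\<omega>. (cmod (a l 0 \<omega>))\<^sup>2 \<partial>M)" by (rule integral_complex_of_real)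
  finally have "Cl l = (\<integral>\<omega>. (cmod (a l 0 \<omega>))\<^sup>2 \<partial>M)" by simp
  also have "\<dots> \<ge> 0" by (rule integral_nonneg_AE) auto
  finally show ?thesis .
qed

lemma prod_integrable:
  assumes iso: "isotropic_gaussian_coeffs M a Cl"
    and p: "\<bar>m\<bar> \<le> int l" and q: "\<bar>m'\<bar> \<le> int l'"
  shows "integrable M (\<lambda>\<omega>. a l m \<omega> * cnj (a l' m' \<omega>))"
proof (rule Bochner_Integration.integrable_bound[where f="\<lambda>\<omega>. (cmod (a l m \<omega>))\<^sup>2 + (cmod (a l' m' \<omega>))\<^sup>2"])
  show "integrable M (\<lambda>\<omega>. (cmod (a l m \<omega>))\<^sup>2 + (cmod (a l' m' \<omega>))\<^sup>2)"
    using iso_parts(3)[OF iso p] iso_parts(3)[OF iso q] by simp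
  have [measurable]: "a l m \<in> borel_measurable M" "a l' m' \<in> borel_measurable M"
    using iso_parts(2)[OF iso p] iso_parts(2)[OF iso q] by auto
  have cm: "cnj \<in> borel_measurable borel"
    by (intro borel_measurable_continuous_onI continuous_intros)
  have [measurable]: "(\<lambda>\<omega>. cnj (a l' m' \<omega>)) \<in> borel_measurable M"
    by (rule measurable_compose[OF iso_parts(2)[OF iso q] cm])
  show "(\<lambda>\<omega>. a l m \<omega> * cnj (a l' m' \<omega>)) \<in> borel_measurable M" by measurable
  show "AE x in M. norm (a l m x * cnj (a l' m' x)) \<le> norm ((cmod (a l m x))\<^sup>2 + (cmod (a l' m' x))\<^sup>2)"
  proof (rule AE_I2)
    fix x
    have "cmod (a l m x) * cmod (a l' m' x) \<le> (cmod (a l m x))\<^sup>2 + (cmod (a l' m' x))\<^sup>2"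
      using sum_squares_ge_zero
      by (smt (verit, best) norm_ge_zero power2_eq_square mult_right_mono mult_left_mono)
    then show "norm (a l m x * cnj (a l' m' x)) \<le> norm ((cmod (a l m x))\<^sup>2 + (cmod (a l' m' x))\<^sup>2)"
      by (simp add: norm_mult)
  qed
qed

lemma orth:
  assumes iso: "isotropic_gaussian_coeffs M a Cl" and fin: "finite I"
    and sub: "I \<subseteq> {(l,m). \<bar>m\<bar> \<le> int l}"
  shows "integrable M (\<lambda>\<omega>. (cmod (\<Sum>p\<in>I. \<beta> p * a (fst p) (snd p) \<omega>))\<^sup>2)"
    "(\<integral>\<omega>. (cmod (\<Sum>p\<in>I. \<beta> p * a (fst p) (snd p) \<omega>))\<^sup>2 \<partial>M) = (\<Sum>p\<in>I. (cmod (\<beta> p))\<^sup>2 * Cl (fst p))"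
proof -
  define f where "f \<omega> = (\<Sum>p\<in>I. \<beta> p * a (fst p) (snd p) \<omega>)" for \<omega>
  have ff: "f \<omega> * cnj (f \<omega>) = (\<Sum>p\<in>I. \<Sum>q\<in>I. (\<beta> p * cnj (\<beta> q)) * (a (fst p) (snd p) \<omega> * cnj (a (fst q) (snd q) \<omega>)))" for \<omega>
    unfolding f_def by (simp add: sum_product algebra_simps)
  have ip: "integrable M (\<lambda>\<omega>. (\<beta> p * cnj (\<beta> q)) * (a (fst p) (snd p) \<omega> * cnj (a (fst q) (snd q) \<omega>)))"
    if "p \<in> I" "q \<in> I" for p q
    using that sub by (intro integrable_mult_right prod_integrable[OF iso]) auto
  have intf: "integrable M (\<lambda>\<omega>. f \<omega> * cnj (f \<omega>))"
    unfolding ff by (intro Bochner_Integration.integrable_sum ip)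
  have eqf: "(\<lambda>\<omega>. (cmod (f \<omega>))\<^sup>2) = (\<lambda>\<omega>. Re (f \<omega> * cnj (f \<omega>)))"
    by (rule ext) (metis Re_complex_of_real complex_norm_square)
  show "integrable M (\<lambda>\<omega>. (cmod (\<Sum>p\<in>I. \<beta> p * a (fst p) (snd p) \<omega>))\<^sup>2)"
  proof -
    have iR: "integrable M (\<lambda>\<omega>. Re (f \<omega> * cnj (f \<omega>)))" using intf by (rule integrable_Re)
    show ?thesis using iR unfolding f_def[symmetric] eqf .
  qed
  have "(\<integral>\<omega>. f \<omega> * cnj (f \<omega>) \<partial>M) = (\<Sum>p\<in>I. \<Sum>q\<in>I. (\<beta> p * cnj (\<beta> q)) * (\<integral>\<omega>. a (fst p) (snd p) \<omega> * cnj (a (fst q) (snd q) \<omega>) \<partial>M))"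
    unfolding ff using ip by (simp add: Bochner_Integration.integral_sum Bochner_Integration.integrable_sum)
  also have "\<dots> = (\<Sum>p\<in>I. \<Sum>q\<in>I. (\<beta> p * cnj (\<beta> q)) * (if p = q then complex_of_real (Cl (fst p)) else 0))"
  proof (intro sum.cong refl)
    fix p q assume "p \<in> I" "q \<in> I"
    then show "(\<beta> p * cnj (\<beta> q)) * (\<integral>\<omega>. a (fst p) (snd p) \<omega> * cnj (a (fst q) (snd q) \<omega>) \<partial>M)
      = (\<beta> p * cnj (\<beta> q)) * (if p = q then complex_of_real (Cl (fst p)) else 0)"
    proof -
      have h: "\<bar>snd p\<bar> \<le> int (fst p)" "\<bar>snd q\<bar> \<le> int (fst q)"
        using sub \<open>p \<in> I\<close> \<open>q \<in> I\<close> by auto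
      show ?thesis
        using iso_parts(4)[OF iso h] by (auto simp: prod_eq_iff)
    qed
  qed
  also have "\<dots> = (\<Sum>p\<in>I. complex_of_real ((cmod (\<beta> p))\<^sup>2 * Cl (fst p)))"
  proof (intro sum.cong refl)
    fix p assume "p \<in> I"
    have "(\<Sum>q\<in>I. (\<beta> p * cnj (\<beta> q)) * (if p = q then complex_of_real (Cl (fst p)) else 0))
       = (\<Sum>q\<in>I. (if p = q then (\<beta> p * cnj (\<beta> p)) * complex_of_real (Cl (fst p)) else 0))"
      by (intro sum.cong refl) auto
    also have "\<dots> = (\<beta> p * cnj (\<beta> p)) * complex_of_real (Cl (fst p))"
      using \<open>p \<in> I\<close> fin by (simp add: sum.delta)
    also have "\<dots> = complex_of_real ((cmod (\<beta> p))\<^sup>2 * Cl (fst p))"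
      by (simp flip: complex_norm_square)
    finally show "(\<Sum>q\<in>I. (\<beta> p * cnj (\<beta> q)) * (if p = q then complex_of_real (Cl (fst p)) else 0))
       = complex_of_real ((cmod (\<beta> p))\<^sup>2 * Cl (fst p))" .
  qed
  finally have h: "(\<integral>\<omega>. f \<omega> * cnj (f \<omega>) \<partial>M) = complex_of_real (\<Sum>p\<in>I. (cmod (\<beta> p))\<^sup>2 * Cl (fst p))"
    by simp
  show "(\<integral>\<omega>. (cmod (\<Sum>p\<in>I. \<beta> p * a (fst p) (snd p) \<omega>))\<^sup>2 \<partial>M) = (\<Sum>p\<in>I. (cmod (\<beta> p))\<^sup>2 * Cl (fst p))"
  proof -
    have "(\<integral>\<omega>. Re (f \<omega> * cnj (f \<omega>)) \<partial>M) = Re (\<integral>\<omega>. f \<omega> * cnj (f \<omega>) \<partial>M)"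
      using intf by (rule integral_Re)
    also have "\<dots> = (\<Sum>p\<in>I. (cmod (\<beta> p))\<^sup>2 * Cl (fst p))" unfolding h by (simp only: Re_complex_of_real)
    finally show ?thesis unfolding f_def[symmetric] eqf .
  qed
qed

lemma sq_eps: "a \<ge> 0 \<Longrightarrow> b \<ge> 0 \<Longrightarrow> (e::real) > 0 \<Longrightarrow> (a+b)^2 \<le> (1+e)*a^2 + (1+1/e)*b^2"
proof -
  assume "a \<ge> 0" "b \<ge> 0" "e > 0"
  have eq: "(1+e)*a^2 + (1+1/e)*b^2 - (a+b)^2 = (e*a - b)^2/e"
    using \<open>e>0\<close> by (simp add: field_simps power2_eq_square)
  have "(e*a - b)^2/e \<ge> 0" using \<open>e>0\<close> by simp
  then show ?thesis using eq by linarith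
qed

lemma cmod_sq_eps: "(e::real) > 0 \<Longrightarrow> (cmod (x + y))^2 \<le> (1+e)*(cmod x)^2 + (1+1/e)*(cmod y)^2"
proof -
  assume e: "e > 0"
  have "(cmod (x + y))^2 \<le> (cmod x + cmod y)^2"
    by (rule power_mono[OF norm_triangle_ineq]) simp
  also have "\<dots> \<le> (1+e)*(cmod x)^2 + (1+1/e)*(cmod y)^2" by (rule sq_eps) (simp_all add: e)
  finally show ?thesis .
qed

lemma cmod_sq_2: "(cmod (x + y))^2 \<le> 2*(cmod x)^2 + 2*(cmod y)^2"
  using cmod_sq_eps[of 1 x y] by simp

lemma lim_bound:
  fixes W :: "'w \<Rightarrow> complex" and Dn :: "nat \<Rightarrow> 'w \<Rightarrow> complex"
  assumes Wm: "W \<in> borel_measurable M" and Dm: "\<And>N. Dn N \<in> borel_measurable M"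
    and lim: "(\<lambda>N. \<integral>\<^sup>+ \<omega>. ennreal ((cmod (W \<omega> - Dn N \<omega>))\<^sup>2) \<partial>M) \<longlonglongrightarrow> 0"
    and bnd: "\<And>N. N \<ge> L \<Longrightarrow> integrable M (\<lambda>\<omega>. (cmod (Dn N \<omega>))\<^sup>2) \<and> (\<integral>\<omega>. (cmod (Dn N \<omega>))\<^sup>2 \<partial>M) \<le> B"
  shows "integrable M (\<lambda>\<omega>. (cmod (W \<omega>))\<^sup>2) \<and> (\<integral>\<omega>. (cmod (W \<omega>))\<^sup>2 \<partial>M) \<le> B"
proof -
  have [measurable]: "W \<in> borel_measurable M" "\<And>N. Dn N \<in> borel_measurable M" using Wm Dm by auto
  have ev: "eventually (\<lambda>N. (\<integral>\<^sup>+ \<omega>. ennreal ((cmod (W \<omega> - Dn N \<omega>))\<^sup>2) \<partial>M) < 1) sequentially"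
    using lim by (rule order_tendstoD) simp
  then obtain N0 where N0: "\<And>N. N \<ge> N0 \<Longrightarrow> (\<integral>\<^sup>+ \<omega>. ennreal ((cmod (W \<omega> - Dn N \<omega>))\<^sup>2) \<partial>M) < 1"
    by (auto simp: eventually_sequentially)
  define N1 where "N1 = max N0 L"
  have N1: "N1 \<ge> L" "(\<integral>\<^sup>+ \<omega>. ennreal ((cmod (W \<omega> - Dn N1 \<omega>))\<^sup>2) \<partial>M) < 1"
    using N0[of N1] unfolding N1_def by auto
  have iD: "integrable M (\<lambda>\<omega>. (cmod (Dn N1 \<omega>))\<^sup>2)" using bnd[OF N1(1)] by simp
  have fin1: "(\<integral>\<^sup>+ \<omega>. ennreal ((cmod (Dn N1 \<omega>))\<^sup>2) \<partial>M) < \<infinity>"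
    using nn_integral_eq_integral[OF iD] by simp
  have "(\<integral>\<^sup>+ \<omega>. ennreal ((cmod (W \<omega>))\<^sup>2) \<partial>M)
     \<le> (\<integral>\<^sup>+ \<omega>. 2 * ennreal ((cmod (W \<omega> - Dn N1 \<omega>))\<^sup>2) + 2 * ennreal ((cmod (Dn N1 \<omega>))\<^sup>2) \<partial>M)"
  proof (rule nn_integral_mono)
    fix \<omega>
    have pw: "(cmod (W \<omega>))\<^sup>2 \<le> 2 * (cmod (W \<omega> - Dn N1 \<omega>))\<^sup>2 + 2 * (cmod (Dn N1 \<omega>))\<^sup>2"
      using cmod_sq_2[of "W \<omega> - Dn N1 \<omega>" "Dn N1 \<omega>"] by simp
    show "ennreal ((cmod (W \<omega>))\<^sup>2) \<le> 2 * ennreal ((cmod (W \<omega> - Dn N1 \<omega>))\<^sup>2) + 2 * ennreal ((cmod (Dn N1 \<omega>))\<^sup>2)"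
    proof -
      have "ennreal (2 * (cmod (W \<omega> - Dn N1 \<omega>))\<^sup>2 + 2 * (cmod (Dn N1 \<omega>))\<^sup>2)
          = ennreal (2 * (cmod (W \<omega> - Dn N1 \<omega>))\<^sup>2) + ennreal (2 * (cmod (Dn N1 \<omega>))\<^sup>2)"
        by (rule ennreal_plus) auto
      also have "\<dots> = 2 * ennreal ((cmod (W \<omega> - Dn N1 \<omega>))\<^sup>2) + 2 * ennreal ((cmod (Dn N1 \<omega>))\<^sup>2)"
        by (simp add: ennreal_mult')
      finally show ?thesis using ennreal_leI[OF pw] by simp
    qed
  qed
  also have "\<dots> = 2 * (\<integral>\<^sup>+ \<omega>. ennreal ((cmod (W \<omega> - Dn N1 \<omega>))\<^sup>2) \<partial>M) + 2 * (\<integral>\<^sup>+ \<omega>. ennreal ((cmod (Dn N1 \<omega>))\<^sup>2) \<partial>M)"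
    by (simp add: nn_integral_add nn_integral_cmult)
  also have "\<dots> < \<infinity>"
  proof -
    have a: "(\<integral>\<^sup>+ \<omega>. ennreal ((cmod (W \<omega> - Dn N1 \<omega>))\<^sup>2) \<partial>M) < \<top>"
      using N1(2) by (rule order.strict_trans) simp
    show ?thesis using a fin1 by (simp add: ennreal_mult_less_top)
  qed
  finally have finW: "(\<integral>\<^sup>+ \<omega>. ennreal ((cmod (W \<omega>))\<^sup>2) \<partial>M) < \<infinity>" .
  have iW: "integrable M (\<lambda>\<omega>. (cmod (W \<omega>))\<^sup>2)"
    by (rule integrableI_nonneg) (use finW in auto)
  have iWD: "integrable M (\<lambda>\<omega>. (cmod (W \<omega> - Dn N \<omega>))\<^sup>2)" if "N \<ge> L" for N
  proof (rule Bochner_Integration.integrable_bound[where f="\<lambda>\<omega>. 2 * (cmod (W \<omega>))\<^sup>2 + 2 * (cmod (Dn N \<omega>))\<^sup>2"])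
    show "integrable M (\<lambda>\<omega>. 2 * (cmod (W \<omega>))\<^sup>2 + 2 * (cmod (Dn N \<omega>))\<^sup>2)"
      using iW bnd[OF that] by simp
    show "(\<lambda>\<omega>. (cmod (W \<omega> - Dn N \<omega>))\<^sup>2) \<in> borel_measurable M" by measurable
    show "AE x in M. norm ((cmod (W x - Dn N x))\<^sup>2) \<le> norm (2 * (cmod (W x))\<^sup>2 + 2 * (cmod (Dn N x))\<^sup>2)"
      using cmod_sq_2[of "W _" "- Dn N _"] by simp
  qed
  define r where "r N = (\<integral>\<omega>. (cmod (W \<omega> - Dn N \<omega>))\<^sup>2 \<partial>M)" for N
  have rlim: "r \<longlonglongrightarrow> 0"
  proof -
    have "(\<lambda>N. enn2real (\<integral>\<^sup>+ \<omega>. ennreal ((cmod (W \<omega> - Dn N \<omega>))\<^sup>2) \<partial>M)) \<longlonglongrightarrow> 0"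
      using tendsto_enn2real[of _ 0] lim by simp
    moreover have "eventually (\<lambda>N. enn2real (\<integral>\<^sup>+ \<omega>. ennreal ((cmod (W \<omega> - Dn N \<omega>))\<^sup>2) \<partial>M) = r N) sequentially"
      using eventually_ge_at_top[of L]
    proof eventually_elim
      case (elim N)
      show ?case unfolding r_def using nn_integral_eq_integral[OF iWD[OF elim]] by simp
    qed
    ultimately show ?thesis by (rule Lim_transform_eventually)
  qed
  have "0 \<le> (\<integral>\<omega>. (cmod (Dn L \<omega>))\<^sup>2 \<partial>M)" by (rule integral_nonneg_AE) auto
  then have B0: "B \<ge> 0" using bnd[of L] by linarith
  have epsb: "(\<integral>\<omega>. (cmod (W \<omega>))\<^sup>2 \<partial>M) \<le> (1+e)*B" if e: "e > 0" for e
  proof -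
    have le: "(\<integral>\<omega>. (cmod (W \<omega>))\<^sup>2 \<partial>M) \<le> (1+e)*B + (1+1/e) * r N" if N: "N \<ge> L" for N
    proof -
      have "(\<integral>\<omega>. (cmod (W \<omega>))\<^sup>2 \<partial>M) \<le> (\<integral>\<omega>. (1+e)*(cmod (Dn N \<omega>))\<^sup>2 + (1+1/e)*(cmod (W \<omega> - Dn N \<omega>))\<^sup>2 \<partial>M)"
      proof (rule integral_mono)
        show "integrable M (\<lambda>\<omega>. (1+e)*(cmod (Dn N \<omega>))\<^sup>2 + (1+1/e)*(cmod (W \<omega> - Dn N \<omega>))\<^sup>2)"
          using bnd[OF N] iWD[OF N] by simp
        fix \<omega> show "(cmod (W \<omega>))\<^sup>2 \<le> (1+e)*(cmod (Dn N \<omega>))\<^sup>2 + (1+1/e)*(cmod (W \<omega> - Dn N \<omega>))\<^sup>2"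
          using cmod_sq_eps[OF e, of "Dn N \<omega>" "W \<omega> - Dn N \<omega>"] by simp
      qed (rule iW)
      also have "\<dots> = (1+e) * (\<integral>\<omega>. (cmod (Dn N \<omega>))\<^sup>2 \<partial>M) + (1+1/e) * r N"
        unfolding r_def using bnd[OF N] iWD[OF N] by simp
      also have "\<dots> \<le> (1+e)*B + (1+1/e) * r N"
        using bnd[OF N] e by simp
      finally show ?thesis .
    qed
    have "((\<lambda>N. (1+e)*B + (1+1/e) * r N) \<longlongrightarrow> (1+e)*B + (1+1/e) * 0) sequentially"
      by (intro tendsto_intros rlim)
    then show ?thesis
      using le by (intro tendsto_le[OF trivial_limit_sequentially]) (auto intro: eventually_sequentiallyI[of L])
  qed
  have "(\<integral>\<omega>. (cmod (W \<omega>))\<^sup>2 \<partial>M) \<le> B"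
  proof (rule field_le_epsilon)
    fix e :: real assume e: "e > 0"
    have "(\<integral>\<omega>. (cmod (W \<omega>))\<^sup>2 \<partial>M) \<le> (1 + e/(B+1))*B" using epsb[of "e/(B+1)"] e B0 by simp
    also have "\<dots> = B + e * (B/(B+1))" using B0 by (simp add: field_simps)
    also have "\<dots> \<le> B + e * 1" using B0 e by (intro add_left_mono mult_left_mono) auto
    finally show "(\<integral>\<omega>. (cmod (W \<omega>))\<^sup>2 \<partial>M) \<le> B + e" by simp
  qed
  then show ?thesis using iW by simp
qed

definition bet :: "real \<Rightarrow> real \<Rightarrow> real \<Rightarrow> real \<Rightarrow> real \<Rightarrow> real \<Rightarrow> nat \<times> int \<Rightarrow> complex" where
  "bet c D k \<theta> \<phi> t p = complex_of_real (exp (- (c\<^sup>2 * t) / (2 * D))) * sph_harm (fst p) (snd p) \<theta> \<phi>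
     * complex_of_real (sqrt (4 * pi / (2 * real (fst p) + 1))) * cnj (sph_harm (fst p) 0 0 0)
     * complex_of_real (Al c D k (fst p) t + Bl c D k (fst p) t)"

abbreviation Iset :: "nat \<Rightarrow> nat \<Rightarrow> (nat \<times> int) set" where
  "Iset L N \<equiv> Sigma {L..<N} (\<lambda>l. {- int l..int l})"

lemma Iset_sub: "Iset L N \<subseteq> {(l,m). \<bar>m\<bar> \<le> int l}" by auto

lemma trunc_diff:
  assumes "L \<le> N"
  shows "u_trunc c D k a N \<theta> \<phi> t \<omega> - u_trunc c D k a L \<theta> \<phi> t \<omega>
     = (\<Sum>p\<in>Iset L N. bet c D k \<theta> \<phi> t p * a (fst p) (snd p) \<omega>)"
proof -
  define X where "X l = (\<Sum>m\<in>{- int l..int l}. sph_harm l m \<theta> \<phi> * xi_coef c D k a l m t \<omega>)" for l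
  define E where "E = complex_of_real (exp (- (c\<^sup>2 * t) / (2 * D)))"
  have "u_trunc c D k a N \<theta> \<phi> t \<omega> - u_trunc c D k a L \<theta> \<phi> t \<omega> = E * (sum X {0..<N} - sum X {0..<L})"
    unfolding u_trunc_def X_def E_def by (simp add: lessThan_atLeast0 algebra_simps)
  also have "sum X {0..<N} - sum X {0..<L} = sum X {L..<N}"
    using sum_diff_nat_ivl[of 0 L N X] assms by simp
  also have "E * sum X {L..<N} = (\<Sum>l\<in>{L..<N}. \<Sum>m\<in>{- int l..int l}. E * (sph_harm l m \<theta> \<phi> * xi_coef c D k a l m t \<omega>))"
    unfolding X_def by (simp add: sum_distrib_left)
  also have "\<dots> = (\<Sum>(l,m)\<in>Iset L N. E * (sph_harm l m \<theta> \<phi> * xi_coef c D k a l m t \<omega>))"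
    by (rule sum.Sigma) auto
  also have "\<dots> = (\<Sum>p\<in>Iset L N. bet c D k \<theta> \<phi> t p * a (fst p) (snd p) \<omega>)"
    by (intro sum.cong refl) (auto simp: bet_def xi_coef_def E_def)
  finally show ?thesis .
qed

lemma trunc_0: "u_trunc c D k a 0 \<theta> \<phi> t \<omega> = 0"
  unfolding u_trunc_def by simp

lemma psum_meas:
  assumes iso: "isotropic_gaussian_coeffs M a Cl" and sub: "I \<subseteq> {(l,m). \<bar>m\<bar> \<le> int l}"
  shows "(\<lambda>\<omega>. \<Sum>p\<in>I. \<beta> p * a (fst p) (snd p) \<omega>) \<in> borel_measurable M"
proof (rule borel_measurable_sum)
  fix p assume "p \<in> I"
  then have [measurable]: "a (fst p) (snd p) \<in> borel_measurable M"
    using sub iso_parts(2)[OF iso] by auto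
  show "(\<lambda>\<omega>. \<beta> p * a (fst p) (snd p) \<omega>) \<in> borel_measurable M" by measurable
qed

lemma trunc_meas:
  assumes iso: "isotropic_gaussian_coeffs M a Cl"
  shows "(\<lambda>\<omega>. u_trunc c D k a N \<theta> \<phi> t \<omega>) \<in> borel_measurable M"
proof -
  have "(\<lambda>\<omega>. u_trunc c D k a N \<theta> \<phi> t \<omega>) = (\<lambda>\<omega>. \<Sum>p\<in>Iset 0 N. bet c D k \<theta> \<phi> t p * a (fst p) (snd p) \<omega>)"
    using trunc_diff[of 0 N c D k a \<theta> \<phi> t] by (simp add: trunc_0)
  then show ?thesis using psum_meas[OF iso Iset_sub] by simp
qed

lemma bet_sq: "(cmod (bet c D k \<theta> \<phi> t (l,m)))^2 =
   (exp (- (c\<^sup>2 * t) / (2 * D)) * (Al c D k l t + Bl c D k l t))^2 * (cmod (sph_harm l m \<theta> \<phi>))^2"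
proof -
  have y: "cmod (cnj (sph_harm l 0 0 0)) = sqrt ((2*real l+1)/(4*pi))" by (simp add: Y00)
  have "(cmod (bet c D k \<theta> \<phi> t (l,m)))^2 = (exp (- (c\<^sup>2 * t) / (2 * D)))^2 * (cmod (sph_harm l m \<theta> \<phi>))^2
     * (sqrt (4 * pi / (2 * real l + 1)))^2 * (sqrt ((2*real l+1)/(4*pi)))^2 * (Al c D k l t + Bl c D k l t)^2"
    unfolding bet_def by (simp only: norm_mult y fst_conv snd_conv norm_of_real power_mult_distrib power2_abs)
  also have "(sqrt (4 * pi / (2 * real l + 1)))^2 * (sqrt ((2*real l+1)/(4*pi)))^2 = 1"
  proof -
    have "pi * 4 + pi * (real l * 8) > 0" using pi_gt_zero by (simp add: add_pos_nonneg)
    then show ?thesis by (simp add: field_simps)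
  qed
  then show ?thesis using calculation by (simp add: power_mult_distrib mult_ac)
qed

lemma var_N:
  assumes iso: "isotropic_gaussian_coeffs M a Cl" and LN: "L \<le> N"
  shows "integrable M (\<lambda>\<omega>. (cmod (u_trunc c D k a N \<theta> \<phi> t \<omega> - u_trunc c D k a L \<theta> \<phi> t \<omega>))\<^sup>2)"
    "(\<integral>\<omega>. (cmod (u_trunc c D k a N \<theta> \<phi> t \<omega> - u_trunc c D k a L \<theta> \<phi> t \<omega>))\<^sup>2 \<partial>M)
      = (\<Sum>l\<in>{L..<N}. (exp (- (c\<^sup>2 * t) / (2 * D)) * (Al c D k l t + Bl c D k l t))^2 * ((2*real l+1)/(4*pi)) * Cl l)"
proof -
  note td = trunc_diff[OF LN, of c D k a \<theta> \<phi> t]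
  show "integrable M (\<lambda>\<omega>. (cmod (u_trunc c D k a N \<theta> \<phi> t \<omega> - u_trunc c D k a L \<theta> \<phi> t \<omega>))\<^sup>2)"
    unfolding td by (rule orth(1)[OF iso _ Iset_sub]) simp
  have "(\<integral>\<omega>. (cmod (u_trunc c D k a N \<theta> \<phi> t \<omega> - u_trunc c D k a L \<theta> \<phi> t \<omega>))\<^sup>2 \<partial>M)
     = (\<Sum>p\<in>Iset L N. (cmod (bet c D k \<theta> \<phi> t p))\<^sup>2 * Cl (fst p))"
    unfolding td by (rule orth(2)[OF iso _ Iset_sub]) simp
  also have "\<dots> = (\<Sum>l\<in>{L..<N}. \<Sum>m\<in>{- int l..int l}. (cmod (bet c D k \<theta> \<phi> t (l,m)))\<^sup>2 * Cl l)"
    by (subst sum.Sigma) (auto simp: case_prod_beta)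
  also have "\<dots> = (\<Sum>l\<in>{L..<N}. (exp (- (c\<^sup>2 * t) / (2 * D)) * (Al c D k l t + Bl c D k l t))^2 * ((2*real l+1)/(4*pi)) * Cl l)"
  proof (intro sum.cong refl)
    fix l
    show "(\<Sum>m\<in>{- int l..int l}. (cmod (bet c D k \<theta> \<phi> t (l,m)))\<^sup>2 * Cl l)
       = (exp (- (c\<^sup>2 * t) / (2 * D)) * (Al c D k l t + Bl c D k l t))^2 * ((2*real l+1)/(4*pi)) * Cl l"
      unfolding bet_sq by (simp add: sum_distrib_left[symmetric] sum_distrib_right[symmetric] sph_sum mult_ac)
  qed
  finally show "(\<integral>\<omega>. (cmod (u_trunc c D k a N \<theta> \<phi> t \<omega> - u_trunc c D k a L \<theta> \<phi> t \<omega>))\<^sup>2 \<partial>M)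
      = (\<Sum>l\<in>{L..<N}. (exp (- (c\<^sup>2 * t) / (2 * D)) * (Al c D k l t + Bl c D k l t))^2 * ((2*real l+1)/(4*pi)) * Cl l)" .
qed

lemma tail_bound:
  assumes iso: "isotropic_gaussian_coeffs M a Cl" and LN: "L \<le> N"
    and rho: "\<And>l. l \<ge> L \<Longrightarrow> (exp (- (c\<^sup>2 * t) / (2 * D)) * (Al c D k l t + Bl c D k l t))^2 \<le> \<rho>^2"
  shows "integrable M (\<lambda>\<omega>. (cmod (u_trunc c D k a N \<theta> \<phi> t \<omega> - u_trunc c D k a L \<theta> \<phi> t \<omega>))\<^sup>2)
    \<and> (\<integral>\<omega>. (cmod (u_trunc c D k a N \<theta> \<phi> t \<omega> - u_trunc c D k a L \<theta> \<phi> t \<omega>))\<^sup>2 \<partial>M)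
      \<le> \<rho>^2 * (\<Sum>n. (2 * real (n + L) + 1) * Cl (n + L))"
proof
  show "integrable M (\<lambda>\<omega>. (cmod (u_trunc c D k a N \<theta> \<phi> t \<omega> - u_trunc c D k a L \<theta> \<phi> t \<omega>))\<^sup>2)"
    by (rule var_N(1)[OF iso LN])
  define h where "h l = (2 * real l + 1) * Cl l" for l
  have h0: "h l \<ge> 0" for l unfolding h_def using Cl_nonneg[OF iso] by simp
  have "(\<integral>\<omega>. (cmod (u_trunc c D k a N \<theta> \<phi> t \<omega> - u_trunc c D k a L \<theta> \<phi> t \<omega>))\<^sup>2 \<partial>M)
     = (\<Sum>l\<in>{L..<N}. (exp (- (c\<^sup>2 * t) / (2 * D)) * (Al c D k l t + Bl c D k l t))^2 * ((2*real l+1)/(4*pi)) * Cl l)"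
    by (rule var_N(2)[OF iso LN])
  also have "\<dots> \<le> (\<Sum>l\<in>{L..<N}. \<rho>^2 * h l)"
  proof (rule sum_mono)
    fix l assume "l \<in> {L..<N}"
    then have r: "(exp (- (c\<^sup>2 * t) / (2 * D)) * (Al c D k l t + Bl c D k l t))^2 \<le> \<rho>^2" using rho by simp
    have p: "1 / (4*pi) \<le> (1::real)" using pi_gt3 by (simp add: field_simps)
    have "(exp (- (c\<^sup>2 * t) / (2 * D)) * (Al c D k l t + Bl c D k l t))^2 * ((2*real l+1)/(4*pi)) * Cl l
       = ((exp (- (c\<^sup>2 * t) / (2 * D)) * (Al c D k l t + Bl c D k l t))^2 * (1/(4*pi))) * h l"
      unfolding h_def by (simp add: field_simps)
    also have "\<dots> \<le> (\<rho>^2 * 1) * h l"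
      using r p h0[of l] by (intro mult_right_mono mult_mono) auto
    finally show "(exp (- (c\<^sup>2 * t) / (2 * D)) * (Al c D k l t + Bl c D k l t))^2 * ((2*real l+1)/(4*pi)) * Cl l \<le> \<rho>^2 * h l"
      by simp
  qed
  also have "\<dots> = \<rho>^2 * (\<Sum>n\<in>{0..<N-L}. h (n + L))"
  proof -
    have "{L..<N} = {0+L..<(N-L)+L}" using LN by simp
    then show ?thesis by (simp only: sum_distrib_left[symmetric] sum.shift_bounds_nat_ivl)
  qed
  also have "\<dots> \<le> \<rho>^2 * (\<Sum>n. h (n + L))"
  proof (rule mult_left_mono)
    have "summable h" unfolding h_def using iso_parts(5)[OF iso] by simp
    then have "summable (\<lambda>n. h (n + L))" by (rule summable_ignore_initial_segment)
    then show "(\<Sum>n\<in>{0..<N-L}. h (n + L)) \<le> (\<Sum>n. h (n + L))"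
      by (rule sum_le_suminf) (auto simp: h0)
  qed simp
  finally show "(\<integral>\<omega>. (cmod (u_trunc c D k a N \<theta> \<phi> t \<omega> - u_trunc c D k a L \<theta> \<phi> t \<omega>))\<^sup>2 \<partial>M)
      \<le> \<rho>^2 * (\<Sum>n. (2 * real (n + L) + 1) * Cl (n + L))" unfolding h_def .
qed


lemma Kb_pos:
  assumes "c > 0" "D > 0" "k > 0"
  shows "Kb c D k \<ge> 0"
  using Kb_parts[OF assms] assms unfolding Kb_def
  by (simp add: add_nonneg_nonneg)

theorem corollary1:
  fixes c D k :: real
  assumes "c > 0" and "D > 0" and "k > 0"
  shows "\<exists>Cst::real. \<forall>(M :: 'w measure) a Cl u L \<theta> \<phi> t.
     isotropic_gaussian_coeffs M a Cl \<longrightarrow>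
     (\<forall>\<theta>' \<phi>' t'. u \<theta>' \<phi>' t' \<in> borel_measurable M \<and>
        ((\<lambda>N. \<integral>\<^sup>+ \<omega>. ennreal ((cmod (u \<theta>' \<phi>' t' \<omega> - u_trunc c D k a N \<theta>' \<phi>' t' \<omega>))\<^sup>2) \<partial>M)
           \<longlonglongrightarrow> 0)) \<longrightarrow>
     0 \<le> \<theta> \<longrightarrow> \<theta> < pi \<longrightarrow> 0 \<le> \<phi> \<longrightarrow> \<phi> < 2 * pi \<longrightarrow> t > 0 \<longrightarrow>
     integrable M (\<lambda>\<omega>. (cmod (u \<theta> \<phi> t \<omega> - u_trunc c D k a L \<theta> \<phi> t \<omega>))\<^sup>2) \<and>
     sqrt (\<integral>\<omega>. (cmod (u \<theta> \<phi> t \<omega> - u_trunc c D k a L \<theta> \<phi> t \<omega>))\<^sup>2 \<partial>M)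
       \<le> Cst * sqrt (\<Sum>n. (2 * real (n + L) + 1) * Cl (n + L)) \<and>
     (real L > lstar c D k \<longrightarrow>
       sqrt (\<integral>\<omega>. (cmod (u \<theta> \<phi> t \<omega> - u_trunc c D k a L \<theta> \<phi> t \<omega>))\<^sup>2 \<partial>M)
         \<le> Cst * exp (- (c\<^sup>2 * t) / (2 * D)) * sqrt (\<Sum>n. (2 * real (n + L) + 1) * Cl (n + L)))"
proof (intro exI[of _ "Kb c D k"] allI impI)
  fix M :: "'w measure" and a :: "nat \<Rightarrow> int \<Rightarrow> 'w \<Rightarrow> complex" and Cl :: "nat \<Rightarrow> real"
    and u :: "real \<Rightarrow> real \<Rightarrow> real \<Rightarrow> 'w \<Rightarrow> complex" and L :: nat and \<theta> \<phi> t :: real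
  assume iso: "isotropic_gaussian_coeffs M a Cl"
    and hu: "\<forall>\<theta>' \<phi>' t'. u \<theta>' \<phi>' t' \<in> borel_measurable M \<and>
        ((\<lambda>N. \<integral>\<^sup>+ \<omega>. ennreal ((cmod (u \<theta>' \<phi>' t' \<omega> - u_trunc c D k a N \<theta>' \<phi>' t' \<omega>))\<^sup>2) \<partial>M)
           \<longlonglongrightarrow> 0)"
    and t0: "t > 0"
  define Kc where "Kc = Kb c D k"
  have Kc0: "Kc \<ge> 0" unfolding Kc_def using Kb_pos assms by simp
  define E where "E = exp (- (c\<^sup>2 * t) / (2 * D))"
  have E0: "E > 0" unfolding E_def by simp
  define S where "S = (\<Sum>n. (2 * real (n + L) + 1) * Cl (n + L))"
  define W where "W \<omega> = u \<theta> \<phi> t \<omega> - u_trunc c D k a L \<theta> \<phi> t \<omega>" for \<omega>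
  define Dn where "Dn N \<omega> = u_trunc c D k a N \<theta> \<phi> t \<omega> - u_trunc c D k a L \<theta> \<phi> t \<omega>" for N \<omega>
  have um: "u \<theta> \<phi> t \<in> borel_measurable M" using hu by blast
  have ulim: "(\<lambda>N. \<integral>\<^sup>+ \<omega>. ennreal ((cmod (u \<theta> \<phi> t \<omega> - u_trunc c D k a N \<theta> \<phi> t \<omega>))\<^sup>2) \<partial>M) \<longlonglongrightarrow> 0"
    using hu by blast
  have Wm: "W \<in> borel_measurable M"
    unfolding W_def using um trunc_meas[OF iso] by (intro borel_measurable_diff) auto
  have Dm: "Dn N \<in> borel_measurable M" for N
    unfolding Dn_def using trunc_meas[OF iso] by (intro borel_measurable_diff) auto
  have lim: "(\<lambda>N. \<integral>\<^sup>+ \<omega>. ennreal ((cmod (W \<omega> - Dn N \<omega>))\<^sup>2) \<partial>M) \<longlonglongrightarrow> 0"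
    using ulim unfolding W_def Dn_def by simp
  have main: "integrable M (\<lambda>\<omega>. (cmod (W \<omega>))\<^sup>2) \<and> (\<integral>\<omega>. (cmod (W \<omega>))\<^sup>2 \<partial>M) \<le> \<rho>^2 * S"
    if rho: "\<And>l. l \<ge> L \<Longrightarrow> (E * (Al c D k l t + Bl c D k l t))^2 \<le> \<rho>^2" for \<rho>
  proof (rule lim_bound[OF Wm Dm lim])
    fix N assume "L \<le> N"
    show "integrable M (\<lambda>\<omega>. (cmod (Dn N \<omega>))\<^sup>2) \<and> (\<integral>\<omega>. (cmod (Dn N \<omega>))\<^sup>2 \<partial>M) \<le> \<rho>^2 * S"
      unfolding Dn_def S_def using tail_bound[OF iso \<open>L \<le> N\<close>, of c t D k \<rho> \<theta> \<phi>] rho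
      unfolding E_def by blast
  qed
  have S0: "S \<ge> 0" unfolding S_def
  proof (rule suminf_nonneg)
    have "summable (\<lambda>l. (2 * real l + 1) * Cl l)" by (rule iso_parts(5)[OF iso])
    then show "summable (\<lambda>n. (2 * real (n + L) + 1) * Cl (n + L))"
      by (rule summable_ignore_initial_segment)
    show "\<And>n. 0 \<le> (2 * real (n + L) + 1) * Cl (n + L)" using Cl_nonneg[OF iso] by simp
  qed
  have sq: "sqrt (\<integral>\<omega>. (cmod (W \<omega>))\<^sup>2 \<partial>M) \<le> \<rho> * sqrt S" if "\<rho> \<ge> 0" "(\<integral>\<omega>. (cmod (W \<omega>))\<^sup>2 \<partial>M) \<le> \<rho>^2 * S" for \<rho>
  proof -
    have "sqrt (\<integral>\<omega>. (cmod (W \<omega>))\<^sup>2 \<partial>M) \<le> sqrt (\<rho>^2 * S)" using that by simp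
    also have "\<dots> = \<rho> * sqrt S" using that by (simp add: real_sqrt_mult)
    finally show ?thesis .
  qed
  have b1: "(E * (Al c D k l t + Bl c D k l t))^2 \<le> Kc^2" for l
  proof -
    have "\<bar>E * (Al c D k l t + Bl c D k l t)\<bar> \<le> Kc"
      using g_bound[OF assms t0, of l] E0 unfolding Kc_def E_def by (simp add: abs_mult)
    then have "\<bar>E * (Al c D k l t + Bl c D k l t)\<bar>^2 \<le> Kc^2" by (rule power_mono) simp
    then show ?thesis by simp
  qed
  have m1: "integrable M (\<lambda>\<omega>. (cmod (W \<omega>))\<^sup>2) \<and> (\<integral>\<omega>. (cmod (W \<omega>))\<^sup>2 \<partial>M) \<le> Kc^2 * S"
    using main[of Kc] b1 by blast
  show "integrable M (\<lambda>\<omega>. (cmod (u \<theta> \<phi> t \<omega> - u_trunc c D k a L \<theta> \<phi> t \<omega>))\<^sup>2) \<and>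
     sqrt (\<integral>\<omega>. (cmod (u \<theta> \<phi> t \<omega> - u_trunc c D k a L \<theta> \<phi> t \<omega>))\<^sup>2 \<partial>M)
       \<le> Kb c D k * sqrt (\<Sum>n. (2 * real (n + L) + 1) * Cl (n + L)) \<and>
     (real L > lstar c D k \<longrightarrow>
       sqrt (\<integral>\<omega>. (cmod (u \<theta> \<phi> t \<omega> - u_trunc c D k a L \<theta> \<phi> t \<omega>))\<^sup>2 \<partial>M)
         \<le> Kb c D k * exp (- (c\<^sup>2 * t) / (2 * D)) * sqrt (\<Sum>n. (2 * real (n + L) + 1) * Cl (n + L)))"
  proof (intro conjI impI)
    show "integrable M (\<lambda>\<omega>. (cmod (u \<theta> \<phi> t \<omega> - u_trunc c D k a L \<theta> \<phi> t \<omega>))\<^sup>2)"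
      using m1 unfolding W_def by blast
    show "sqrt (\<integral>\<omega>. (cmod (u \<theta> \<phi> t \<omega> - u_trunc c D k a L \<theta> \<phi> t \<omega>))\<^sup>2 \<partial>M)
       \<le> Kb c D k * sqrt (\<Sum>n. (2 * real (n + L) + 1) * Cl (n + L))"
      using sq[OF Kc0] m1 unfolding W_def S_def Kc_def by blast
    assume hL: "real L > lstar c D k"
    have b2: "(E * (Al c D k l t + Bl c D k l t))^2 \<le> (Kc * E)^2" if "l \<ge> L" for l
    proof -
      have "real l > lstar c D k" using hL that by linarith
      then have "\<bar>Al c D k l t + Bl c D k l t\<bar> \<le> Kc" using g_bound_high[OF assms] unfolding Kc_def by blast
      then have "E * \<bar>Al c D k l t + Bl c D k l t\<bar> \<le> E * Kc" using E0 by simp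
      then have "\<bar>E * (Al c D k l t + Bl c D k l t)\<bar> \<le> Kc * E" using E0 by (simp add: abs_mult mult.commute)
      then have "\<bar>E * (Al c D k l t + Bl c D k l t)\<bar>^2 \<le> (Kc * E)^2" by (rule power_mono) simp
      then show ?thesis by simp
    qed
    have m2: "(\<integral>\<omega>. (cmod (W \<omega>))\<^sup>2 \<partial>M) \<le> (Kc * E)^2 * S"
      using main[of "Kc * E"] b2 by blast
    have "sqrt (\<integral>\<omega>. (cmod (W \<omega>))\<^sup>2 \<partial>M) \<le> (Kc * E) * sqrt S"
      using sq[OF _ m2] Kc0 E0 by simp
    then show "sqrt (\<integral>\<omega>. (cmod (u \<theta> \<phi> t \<omega> - u_trunc c D k a L \<theta> \<phi> t \<omega>))\<^sup>2 \<partial>M)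
         \<le> Kb c D k * exp (- (c\<^sup>2 * t) / (2 * D)) * sqrt (\<Sum>n. (2 * real (n + L) + 1) * Cl (n + L))"
      unfolding W_def S_def Kc_def E_def .
  qed
qed

end
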